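(* Let $r>0$, $p\in(0,1)$, and let $X_1,\dots,X_n$ be i.i.d. samples of a negative binomial random variable $X$ with $\Pr\{X=x\}=\frac{\Gamma(x+r)}{\Gamma(x+1)\Gamma(r)}(1-p)^xp^r$ for $x=0,1,2,\dots$. Let $T(x)=\frac{r+x}{r}$ and $\theta=\frac1p$. Then $$\Pr\Big\{\sum_{i=1}^nT(X_i)\ge nz\Big\}\le\left[\frac{pz-p}{1-p}\Big(\frac{z-zp}{z-1}\Big)^z\right]^{nr}\quad\text{for } z\ge\theta=\tfrac1p,$$ $$\Pr\Big\{\sum_{i=1}^nT(X_i)\le nz\Big\}\le\left[\frac{pz-p}{1-p}\Big(\frac{z-zp}{z-1}\Big)^z\right]^{nr}\quad\text{for } 1<z\le\theta=\tfrac1p.$$ *)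

theory Defs
  imports "HOL-Probability.Probability"
begin

definition negbin_mass :: "real \<Rightarrow> real \<Rightarrow> nat \<Rightarrow> real" where
  "negbin_mass r p x = Gamma (real x + r) / (Gamma (real x + 1) * Gamma r) * (1 - p) ^ x * p powr r"

definition nbT :: "real \<Rightarrow> nat \<Rightarrow> real" where
  "nbT r x = (r + real x) / r"

definition nb_bound :: "real \<Rightarrow> real \<Rightarrow> nat \<Rightarrow> real \<Rightarrow> real" where
  "nb_bound r p n z = ((p * z - p) / (1 - p) * ((z - z * p) / (z - 1)) powr z) powr (real n * r)"

end

theory Submission
  imports Defs
begin

lemma nb_series:
  assumes r: "r > 0" and p: "0 < p" "p < 1" and tt: "0 \<le> t" "(1-p)*t < 1"
  shows "(\<lambda>x. negbin_mass r p x * t^x) sums ((p/(1-(1-p)*t)) powr r)"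
proof -
  have "\<bar>-((1-p)*t)\<bar> < 1" proof - have "0 \<le> (1-p)*t" using p tt by simp thus ?thesis using tt by simp qed
  from gen_binomial_real[OF this, of "-r"]
  have A: "(\<lambda>x. (-r gchoose x) * (-((1-p)*t))^x) sums (1 + -((1-p)*t)) powr (-r)" .
  have rn: "r \<notin> \<int>\<^sub>\<le>\<^sub>0" using r nonpos_Ints_nonpos by force
  have eq: "negbin_mass r p x * t^x = p powr r * ((-r gchoose x) * (-((1-p)*t))^x)" for x
  proof -
    have g: "Gamma (real x + 1) = fact x" using Gamma_fact[of x] by (simp add: add.commute)
    have pc: "pochhammer r x = Gamma (real x + r) / Gamma r" using pochhammer_Gamma[OF rn, of x] by (simp add: add.commute)
    have "(-r gchoose x) * (-((1-p)*t))^x = ((-1)^x * (-1)^x) * pochhammer r x / fact x * ((1-p)*t)^x"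
      by (simp add: gbinomial_pochhammer power_minus[of "(1-p)*t"])
    also have "(-1::real)^x * (-1)^x = 1" by (simp flip: power_add)
    finally show ?thesis unfolding negbin_mass_def g pc by (simp add: power_mult_distrib mult_ac)
  qed
  have "(\<lambda>x. p powr r * ((-r gchoose x) * (-((1-p)*t))^x)) sums (p powr r * (1 + -((1-p)*t)) powr (-r))"
    by (rule sums_mult[OF A])
  moreover have "p powr r * (1 + -((1-p)*t)) powr (-r) = (p/(1-(1-p)*t)) powr r"
    proof - have "0 < 1-(1-p)*t" using tt by simp thus ?thesis using p by (subst powr_divide) (auto simp: powr_minus divide_inverse) qed
  ultimately show ?thesis unfolding eq by simp
qed

lemma nb_single:
  assumes M: "prob_space M" and r: "r > 0" and p: "0 < p" "p < 1" and tt: "0 \<le> t" "(1-p)*t < 1"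
    and Xm: "Y \<in> measurable M (count_space UNIV)"
    and dist: "\<forall>x. measure M {\<omega> \<in> space M. Y \<omega> = x} = negbin_mass r p x"
  shows "(\<integral>\<^sup>+\<omega>. ennreal (t ^ Y \<omega>) \<partial>M) = ennreal ((p/(1-(1-p)*t)) powr r)"
proof -
  interpret P: prob_space M by fact
  have A: "{\<omega> \<in> space M. Y \<omega> = x} \<in> sets M" for x
    proof - have "Y -` {x} \<inter> space M \<in> sets M" using Xm by (simp add: measurable_count_space_eq2_countable) thus ?thesis by (simp add: vimage_def Int_def conj_commute) qed
  have mnn: "0 \<le> negbin_mass r p x" for x
    using r p unfolding negbin_mass_def by (intro mult_nonneg_nonneg divide_nonneg_nonneg) (auto intro!: Gamma_real_pos less_imp_le add_nonneg_pos)
  have eq: "ennreal (t ^ Y \<omega>) = (\<Sum>x. ennreal (t^x) * indicator {\<omega> \<in> space M. Y \<omega> = x} \<omega>)"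
    if "\<omega> \<in> space M" for \<omega>
    by (subst suminf_finite[of "{Y \<omega>}"]) (use that in auto)
  have "(\<integral>\<^sup>+\<omega>. ennreal (t ^ Y \<omega>) \<partial>M) = (\<integral>\<^sup>+\<omega>. (\<Sum>x. ennreal (t^x) * indicator {\<omega> \<in> space M. Y \<omega> = x} \<omega>) \<partial>M)"
    by (rule nn_integral_cong) (rule eq)
  also have "\<dots> = (\<Sum>x. \<integral>\<^sup>+\<omega>. ennreal (t^x) * indicator {\<omega> \<in> space M. Y \<omega> = x} \<omega> \<partial>M)"
    using A by (intro nn_integral_suminf) auto
  also have "\<dots> = (\<Sum>x. ennreal (negbin_mass r p x * t^x))"
    using A dist mnn tt by (simp add: nn_integral_cmult_indicator P.emeasure_eq_measure ennreal_mult'' mult.commute)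
  also have "\<dots> = ennreal (\<Sum>x. negbin_mass r p x * t^x)"
    using nb_series[OF r p tt] mnn tt by (intro suminf_ennreal2) (auto simp: sums_iff)
  also have "\<dots> = ennreal ((p/(1-(1-p)*t)) powr r)"
    using nb_series[OF r p tt] by (simp add: sums_iff)
  finally show ?thesis .
qed


lemma nb_chernoff:
  assumes M: "prob_space M"
    and r: "r > 0" and p: "0 < p" "p < 1" and tt: "0 < t" "(1-p)*t < 1"
    and Xm: "\<forall>i<n. X i \<in> measurable M (count_space UNIV)"
    and ind: "prob_space.indep_vars M (\<lambda>_. count_space UNIV) X {..<n}"
    and dist: "\<forall>i<n. \<forall>x. measure M {\<omega> \<in> space M. X i \<omega> = x} = negbin_mass r p x"
    and E: "\<And>\<omega>. \<omega> \<in> E \<Longrightarrow> t powr a \<le> t ^ (\<Sum>i<n. X i \<omega>)"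
  shows "measure M E \<le> ((p/(1-(1-p)*t)) powr r) ^ n / t powr a"
proof (cases "E \<in> sets M")
  case False
  then show ?thesis by (simp add: measure_notin_sets)
next
  case True
  interpret P: prob_space M by fact
  define c where "c = (p/(1-(1-p)*t)) powr r"
  have c0: "0 \<le> c" unfolding c_def by simp
  have mX: "(\<lambda>\<omega>. ennreal (t ^ X i \<omega>)) \<in> borel_measurable M" if "i < n" for i
  proof -
    have "(\<lambda>x::nat. ennreal (t ^ x)) \<in> borel_measurable (count_space UNIV)" by simp
    from measurable_compose[OF _ this] Xm that show ?thesis by auto
  qed
  have indY: "P.indep_vars (\<lambda>_. borel) (\<lambda>i \<omega>. ennreal (t ^ X i \<omega>)) {..<n}"
    by (rule P.indep_vars_compose2[OF ind]) simp
  have pw: "indicator E \<omega> \<le> ennreal (1 / t powr a) * (\<Prod>i<n. ennreal (t ^ X i \<omega>))" for \<omega>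
  proof (cases "\<omega> \<in> E")
    case True
    have "1 \<le> t ^ (\<Sum>i<n. X i \<omega>) / t powr a" using E[OF True] tt by simp
    also have "\<dots> = 1 / t powr a * (\<Prod>i<n. t ^ X i \<omega>)" by (simp add: power_sum)
    finally have "ennreal 1 \<le> ennreal (1 / t powr a * (\<Prod>i<n. t ^ X i \<omega>))" by simp
    moreover have "ennreal (1/t powr a) * (\<Prod>i<n. ennreal (t ^ X i \<omega>)) = ennreal (1/t powr a * (\<Prod>i<n. t^X i \<omega>))"
      using tt by (subst prod_ennreal) (auto simp: ennreal_mult''[symmetric] prod_nonneg)
    ultimately show ?thesis using True by (simp only: indicator_simps ennreal_1)
  qed simp
  have "ennreal (measure M E) = emeasure M E" by (simp add: P.emeasure_eq_measure)
  also have "\<dots> = (\<integral>\<^sup>+\<omega>. indicator E \<omega> \<partial>M)" using True by simp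
  also have "\<dots> \<le> (\<integral>\<^sup>+\<omega>. ennreal (1 / t powr a) * (\<Prod>i<n. ennreal (t ^ X i \<omega>)) \<partial>M)"
    by (intro nn_integral_mono pw)
  also have "\<dots> = ennreal (1 / t powr a) * (\<integral>\<^sup>+\<omega>. (\<Prod>i<n. ennreal (t ^ X i \<omega>)) \<partial>M)"
    using mX by (intro nn_integral_cmult) (auto intro!: borel_measurable_prod_ennreal)
  also have "\<dots> = ennreal (1 / t powr a) * (\<Prod>i<n. \<integral>\<^sup>+\<omega>. ennreal (t ^ X i \<omega>) \<partial>M)"
    using indY by (subst P.indep_vars_nn_integral) auto
  also have "\<dots> = ennreal (1 / t powr a) * (\<Prod>i<n. ennreal c)"
    unfolding c_def using tt Xm dist
    by (intro arg_cong2[where f="(*)"] refl prod.cong nb_single[OF M r p]) auto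
  also have "\<dots> = ennreal (c ^ n / t powr a)"
    using c0 by (simp add: ennreal_power ennreal_mult''[symmetric])
  finally show ?thesis using c0 tt unfolding c_def by (subst (asm) ennreal_le_iff) auto
qed

theorem corollary3:
  fixes M :: "'a measure" and X :: "nat \<Rightarrow> 'a \<Rightarrow> nat"
    and r p z :: real and n :: nat
  assumes "prob_space M"
    and "r > 0" and "0 < p" and "p < 1"
    and "\<forall>i<n. X i \<in> measurable M (count_space UNIV)"
    and "prob_space.indep_vars M (\<lambda>_. count_space UNIV) X {..<n}"
    and "\<forall>i<n. \<forall>x. measure M {\<omega> \<in> space M. X i \<omega> = x} = negbin_mass r p x"
  shows "(z \<ge> 1 / p \<longrightarrow>
            measure M {\<omega> \<in> space M. (\<Sum>i<n. nbT r (X i \<omega>)) \<ge> real n * z} \<le> nb_bound r p n z)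
       \<and> (1 < z \<and> z \<le> 1 / p \<longrightarrow>
            measure M {\<omega> \<in> space M. (\<Sum>i<n. nbT r (X i \<omega>)) \<le> real n * z} \<le> nb_bound r p n z)"
  proof -
  note M = assms(1) and r = assms(2) and p = assms(3,4) and Xm = assms(5) and ind = assms(6) and dist = assms(7)
  have sumeq: "(\<Sum>i<n. nbT r (X i \<omega>)) = real n + real (\<Sum>i<n. X i \<omega>) / r" for \<omega>
    using r by (simp add: nbT_def add_divide_distrib sum.distrib sum_divide_distrib)
  have key: "((p/(1-(1-p)*((z-1)/(z*(1-p))))) powr r) ^ n / ((z-1)/(z*(1-p))) powr (real n * r * (z-1))
      = nb_bound r p n z" if z1: "1 < z" for z
  proof -
    define t where "t = (z-1)/(z*(1-p))"
    have t0: "0 < t" using z1 p unfolding t_def by simp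
    have q: "1-(1-p)*t = 1/z" using z1 p unfolding t_def by (simp add: field_simps)
    have pz: "p/(1-(1-p)*t) = p*z" unfolding q by simp
    have pz0: "0 < p*z" using p z1 by simp
    have A: "((p*z) powr r) ^ n = (p*z) powr (real n * r)"
    proof -
      have "((p*z) powr r) powr real n = ((p*z) powr r) ^ n" using p z1 by (intro powr_realpow) simp
      then show ?thesis by (simp add: powr_powr mult.commute)
    qed
    have B: "t powr (real n * r * (z-1)) = (t powr (z-1)) powr (real n * r)"
      by (simp add: powr_powr mult_ac)
    have C: "t powr (z-1) = t powr z / t" using t0 by (simp add: powr_diff)
    have D: "(z - z*p)/(z-1) = 1/t" using z1 p unfolding t_def by (simp add: field_simps)
    have E: "p*z / t powr (z-1) = (p*z - p)/(1-p) * ((z - z*p)/(z-1)) powr z"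
      unfolding C D using t0 z1 p by (simp add: powr_divide t_def field_simps)
    show ?thesis unfolding t_def[symmetric] pz A B nb_bound_def
      by (simp add: powr_divide[symmetric] E)
  qed
  show ?thesis
  proof (intro conjI impI)
    assume zp: "1/p \<le> z"
    have z1: "1 < z" using p zp by (smt (verit) less_divide_eq_1_pos)
    define t where "t = (z-1)/(z*(1-p))"
    have t1: "1 \<le> t" using z1 p zp unfolding t_def by (simp add: field_simps)
    have tq: "(1-p)*t < 1" using z1 p unfolding t_def by (simp add: field_simps)
    have "measure M {\<omega> \<in> space M. (\<Sum>i<n. nbT r (X i \<omega>)) \<ge> real n * z}
        \<le> ((p/(1-(1-p)*t)) powr r) ^ n / t powr (real n * r * (z-1))"
    proof (rule nb_chernoff[OF M r p _ tq Xm ind dist])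
      show "0 < t" using t1 by simp
      fix \<omega> assume "\<omega> \<in> {\<omega> \<in> space M. (\<Sum>i<n. nbT r (X i \<omega>)) \<ge> real n * z}"
      then have "real n * z \<le> real n + real (\<Sum>i<n. X i \<omega>) / r" by (simp add: sumeq)
      then have "real n * r * (z-1) \<le> real (\<Sum>i<n. X i \<omega>)" using r by (simp add: field_simps)
      then have "t powr (real n * r * (z-1)) \<le> t powr real (\<Sum>i<n. X i \<omega>)" using t1 by (rule powr_mono)
      moreover have "t powr real (\<Sum>i<n. X i \<omega>) = t ^ (\<Sum>i<n. X i \<omega>)" by (rule powr_realpow) (use t1 in simp)
      ultimately show "t powr (real n * r * (z-1)) \<le> t ^ (\<Sum>i<n. X i \<omega>)" by (simp only:)
    qed
    then show "measure M {\<omega> \<in> space M. (\<Sum>i<n. nbT r (X i \<omega>)) \<ge> real n * z} \<le> nb_bound r p n z"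
      using key[OF z1] unfolding t_def by simp
  next
    assume zp: "1 < z \<and> z \<le> 1/p"
    then have z1: "1 < z" by simp
    define t where "t = (z-1)/(z*(1-p))"
    have t0: "0 < t" using z1 p unfolding t_def by simp
    have t1: "t \<le> 1" using z1 p zp unfolding t_def by (simp add: field_simps)
    have tq: "(1-p)*t < 1" using z1 p unfolding t_def by (simp add: field_simps)
    have "measure M {\<omega> \<in> space M. (\<Sum>i<n. nbT r (X i \<omega>)) \<le> real n * z}
        \<le> ((p/(1-(1-p)*t)) powr r) ^ n / t powr (real n * r * (z-1))"
    proof (rule nb_chernoff[OF M r p t0 tq Xm ind dist])
      fix \<omega> assume "\<omega> \<in> {\<omega> \<in> space M. (\<Sum>i<n. nbT r (X i \<omega>)) \<le> real n * z}"
      then have "real n + real (\<Sum>i<n. X i \<omega>) / r \<le> real n * z" by (simp add: sumeq)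
      then have "real (\<Sum>i<n. X i \<omega>) \<le> real n * r * (z-1)" using r by (simp add: field_simps)
      then have "t powr (real n * r * (z-1)) \<le> t powr real (\<Sum>i<n. X i \<omega>)" using t0 t1 by (intro powr_mono') auto
      moreover have "t powr real (\<Sum>i<n. X i \<omega>) = t ^ (\<Sum>i<n. X i \<omega>)" by (rule powr_realpow) (use t0 in simp)
      ultimately show "t powr (real n * r * (z-1)) \<le> t ^ (\<Sum>i<n. X i \<omega>)" by (simp only:)
    qed
    then show "measure M {\<omega> \<in> space M. (\<Sum>i<n. nbT r (X i \<omega>)) \<le> real n * z} \<le> nb_bound r p n z"
      using key[OF z1] unfolding t_def by simp
  qed
qed

end
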